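(* Let $n\in\mathbb{N}$, let $\mathbf{s}=(s_0,\ldots,s_n)\subset[0,\infty)$ be strictly positive on $(0,1]$ and let $s_{-1}\in[0,\infty)$. Then $\mathbf{s}'=(s_{-1},s_0,\ldots,s_n)$ (viewed as a sequence of length $n+2$ with $s_{-1}$ as its zeroth term) is strictly positive on $(0,1]$ if and only if $s_{-1}\in(t_1(\mathbf{s}),\infty)$.
   Context: For $a<b$ and $\mathbf{s}=(s_0,\ldots,s_n)$ let $\sigma(x^k)=s_k$ define a linear functional on real polynomials of degree $\le n$. $\mathbf{s}$ is positive on $[a,b]$ if $\sigma(P)\ge0$ for every such $P$ nonnegative on $[a,b]$, strictly positive if moreover $\sigma(P)>0$ for every such $P\not\equiv0$. Strictly positive on $(0,1]$ means strictly positive on some $[a,b]$ with $0<a<b\le1$. $\mathcal{M}_{a,b}(\mathbf{s})$ is the set of positive Borel measures on $[a,b]$ with $k$-th moments $s_k$ ($k=0,\ldots,n$); $t_{a,b}(\mathbf{s})=\inf\{\int_{[a,b]}\frac1t\,d\mu:\mu\in\mathcal{M}_{a,b}(\mathbf{s})\}$ with $\inf\varnothing=\infty$, and $t_1(\mathbf{s})=\inf_{0<a<b\le1}t_{a,b}(\mathbf{s})$. *)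

theory Defs
  imports "HOL-Analysis.Analysis" "HOL-Probability.Probability" "HOL-Computational_Algebra.Polynomial"
begin

definition mom_fun :: "nat \<Rightarrow> (nat \<Rightarrow> real) \<Rightarrow> real poly \<Rightarrow> real" where
  "mom_fun n s P = (\<Sum>k\<le>n. coeff P k * s k)"

definition nonneg_on :: "real poly \<Rightarrow> real \<Rightarrow> real \<Rightarrow> bool" where
  "nonneg_on P a b \<longleftrightarrow> (\<forall>x\<in>{a..b}. poly P x \<ge> 0)"

definition positive_on :: "nat \<Rightarrow> (nat \<Rightarrow> real) \<Rightarrow> real \<Rightarrow> real \<Rightarrow> bool" where
  "positive_on n s a b \<longleftrightarrow>
     (\<forall>P. degree P \<le> n \<and> nonneg_on P a b \<longrightarrow> mom_fun n s P \<ge> 0)"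

definition strictly_positive_on :: "nat \<Rightarrow> (nat \<Rightarrow> real) \<Rightarrow> real \<Rightarrow> real \<Rightarrow> bool" where
  "strictly_positive_on n s a b \<longleftrightarrow> positive_on n s a b \<and>
     (\<forall>P. degree P \<le> n \<and> nonneg_on P a b \<and> P \<noteq> 0 \<longrightarrow> mom_fun n s P > 0)"

text \<open>Strictly positive on (0,1]: strictly positive on some [a,b] with 0 < a < b <= 1.\<close>
definition strictly_positive_01 :: "nat \<Rightarrow> (nat \<Rightarrow> real) \<Rightarrow> bool" where
  "strictly_positive_01 n s \<longleftrightarrow>
     (\<exists>a b. 0 < a \<and> a < b \<and> b \<le> 1 \<and> strictly_positive_on n s a b)"

definition rep_measures :: "nat \<Rightarrow> (nat \<Rightarrow> real) \<Rightarrow> real \<Rightarrow> real \<Rightarrow> real measure set" where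
  "rep_measures n s a b = {M. sets M = sets borel \<and> finite_measure M \<and>
       emeasure M (UNIV - {a..b}) = 0 \<and>
       (\<forall>k\<le>n. integral\<^sup>L M (\<lambda>x. x ^ k) = s k)}"

definition t_ab :: "nat \<Rightarrow> (nat \<Rightarrow> real) \<Rightarrow> real \<Rightarrow> real \<Rightarrow> ereal" where
  "t_ab n s a b = (INF M\<in>rep_measures n s a b. ereal (integral\<^sup>L M (\<lambda>t. 1 / t)))"

definition t_1 :: "nat \<Rightarrow> (nat \<Rightarrow> real) \<Rightarrow> ereal" where
  "t_1 n s = (INF ab\<in>{(a, b). 0 < a \<and> a < b \<and> b \<le> (1::real)}. t_ab n s (fst ab) (snd ab))"

end

theory Submission
  imports Defs
begin

lemma lin_dep:
  fixes A :: "nat \<Rightarrow> nat \<Rightarrow> real"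
  shows "finite I \<Longrightarrow> M < card I \<Longrightarrow> \<exists>w. (\<exists>i\<in>I. w i \<noteq> 0) \<and> (\<forall>k<M. (\<Sum>i\<in>I. A k i * w i) = 0)"
proof (induction M arbitrary: I A)
  case 0
  then have "I \<noteq> {}" by auto
  then obtain i where "i \<in> I" by auto
  then show ?case by (intro exI[of _ "\<lambda>_. 1"]) auto
next
  case (Suc M)
  show ?case
  proof (cases "\<forall>i\<in>I. A M i = 0")
    case True
    from Suc.IH[of I A] Suc.prems obtain w where w: "\<exists>i\<in>I. w i \<noteq> 0" "\<forall>k<M. (\<Sum>i\<in>I. A k i * w i) = 0" by auto
    have "\<forall>k<Suc M. (\<Sum>i\<in>I. A k i * w i) = 0"
    proof (intro allI impI)
      fix k assume "k < Suc M"
      then consider "k < M" | "k = M" by linarith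
      then show "(\<Sum>i\<in>I. A k i * w i) = 0" using w True by cases auto
    qed
    with w show ?thesis by blast
  next
    case False
    then obtain j where j: "j \<in> I" "A M j \<noteq> 0" by auto
    define I' where "I' = I - {j}"
    define A' where "A' = (\<lambda>k i. A k i - A k j * A M i / A M j)"
    have fin: "finite I'" using Suc.prems by (simp add: I'_def)
    have card: "M < card I'" using Suc.prems j by (simp add: I'_def)
    from Suc.IH[OF fin card, of A'] obtain w' where w': "\<exists>i\<in>I'. w' i \<noteq> 0" "\<forall>k<M. (\<Sum>i\<in>I'. A' k i * w' i) = 0" by auto
    define w where "w = (\<lambda>i. if i = j then - (\<Sum>i\<in>I'. A M i * w' i) / A M j else w' i)"
    have sumsplit: "(\<Sum>i\<in>I. f i) = f j + (\<Sum>i\<in>I'. f i)" for f :: "nat \<Rightarrow> real"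
      using Suc.prems(1) j(1) by (simp add: I'_def sum.remove)
    have wI': "(\<Sum>i\<in>I'. g i * w i) = (\<Sum>i\<in>I'. g i * w' i)" for g
      by (rule sum.cong) (auto simp: w_def I'_def)
    have A'sum: "(\<Sum>i\<in>I'. A' k i * w' i) = (\<Sum>i\<in>I'. A k i * w' i) - A k j / A M j * (\<Sum>i\<in>I'. A M i * w' i)" for k
      by (simp add: A'_def algebra_simps sum_subtractf sum_distrib_left)
    have eqs: "\<forall>k<Suc M. (\<Sum>i\<in>I. A k i * w i) = 0"
    proof (intro allI impI)
      fix k assume "k < Suc M"
      then consider "k < M" | "k = M" by linarith
      then show "(\<Sum>i\<in>I. A k i * w i) = 0"
      proof cases
        case 1
        have "(\<Sum>i\<in>I. A k i * w i) = A k j * w j + (\<Sum>i\<in>I'. A k i * w' i)" by (simp add: sumsplit wI')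
        also have "\<dots> = (\<Sum>i\<in>I'. A' k i * w' i)"
          unfolding A'sum by (simp add: w_def)
        also have "\<dots> = 0" using w' 1 by auto
        finally show ?thesis .
      next
        case 2
        have "(\<Sum>i\<in>I. A k i * w i) = A k j * w j + (\<Sum>i\<in>I'. A k i * w' i)" by (simp add: sumsplit wI')
        also have "\<dots> = 0" using 2 j(2) by (simp add: w_def)
        finally show ?thesis .
      qed
    qed
    have "\<exists>i\<in>I. w i \<noteq> 0" using w' by (auto simp: w_def I'_def)
    with eqs show ?thesis by blast
  qed
qed

lemma carat:
  fixes lam tau :: "nat \<Rightarrow> real"
  shows "finite I \<Longrightarrow> \<forall>i\<in>I. 0 \<le> lam i \<Longrightarrow> \<exists>J lam'. J \<subseteq> I \<and> card J \<le> Suc m \<and> (\<forall>i\<in>J. 0 \<le> lam' i) \<and>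
     (\<forall>k\<le>m. (\<Sum>i\<in>J. lam' i * tau i ^ k) = (\<Sum>i\<in>I. lam i * tau i ^ k))"
proof (induction "card I" arbitrary: I lam rule: less_induct)
  case less
  show ?case
  proof (cases "card I \<le> Suc m")
    case True then show ?thesis using less.prems by blast
  next
    case False
    then have "Suc m < card I" by simp
    from lin_dep[OF less.prems(1) this, of "\<lambda>k i. tau i ^ k"] obtain w0 where
      w0: "\<exists>i\<in>I. w0 i \<noteq> 0" "\<forall>k<Suc m. (\<Sum>i\<in>I. tau i ^ k * w0 i) = 0" by auto
    have "\<exists>w. (\<exists>i\<in>I. w i < 0) \<and> (\<forall>k<Suc m. (\<Sum>i\<in>I. tau i ^ k * w i) = 0)"
    proof (cases "\<exists>i\<in>I. w0 i < 0")
      case True then show ?thesis using w0 by blast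
    next
      case False
      then obtain i where "i\<in>I" "w0 i > 0" using w0(1) by force
      then show ?thesis using w0(2) by (intro exI[of _ "\<lambda>i. - w0 i"]) (auto simp: sum_negf)
    qed
    then obtain w where w: "\<exists>i\<in>I. w i < 0" "\<forall>k<Suc m. (\<Sum>i\<in>I. tau i ^ k * w i) = 0" by blast
    define N where "N = {i\<in>I. w i < 0}"
    have finN: "finite N" "N \<noteq> {}" using less.prems(1) w(1) by (auto simp: N_def)
    define t0 where "t0 = Min ((\<lambda>i. lam i / (- w i)) ` N)"
    have "t0 \<in> (\<lambda>i. lam i / (- w i)) ` N" unfolding t0_def using finN by (intro Min_in) auto
    then obtain j where j: "j \<in> N" "t0 = lam j / (- w j)" by auto
    have t0le: "t0 \<le> lam i / (- w i)" if "i \<in> N" for i using finN that by (auto simp: t0_def)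
    have jI: "j \<in> I" "w j < 0" using j by (auto simp: N_def)
    have t0nn: "0 \<le> t0" using j jI less.prems(2) by (auto simp: divide_le_0_iff)
    define lam1 where "lam1 = (\<lambda>i. lam i + t0 * w i)"
    have lam1nn: "\<forall>i\<in>I. 0 \<le> lam1 i"
    proof
      fix i assume iI: "i \<in> I"
      show "0 \<le> lam1 i"
      proof (cases "w i < 0")
        case True
        then have "i \<in> N" using iI by (simp add: N_def)
        have wpos: "0 < - w i" using True by simp
        from t0le[OF \<open>i \<in> N\<close>] have "t0 * (- w i) \<le> lam i"
          by (simp only: pos_le_divide_eq[OF wpos])
        then show ?thesis by (simp add: lam1_def)
      next
        case False
        then show ?thesis using iI less.prems(2) t0nn by (simp add: lam1_def)
      qed
    qed
    have lam1j: "lam1 j = 0" using j jI by (auto simp: lam1_def field_simps)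
    have sums: "\<forall>k\<le>m. (\<Sum>i\<in>I - {j}. lam1 i * tau i ^ k) = (\<Sum>i\<in>I. lam i * tau i ^ k)"
    proof (intro allI impI)
      fix k assume "k \<le> m"
      have "(\<Sum>i\<in>I - {j}. lam1 i * tau i ^ k) = (\<Sum>i\<in>I. lam1 i * tau i ^ k)"
        using sum.remove[OF less.prems(1) jI(1), of "\<lambda>i. lam1 i * tau i ^ k"] lam1j by simp
      also have "\<dots> = (\<Sum>i\<in>I. lam i * tau i ^ k) + t0 * (\<Sum>i\<in>I. tau i ^ k * w i)"
        by (simp add: lam1_def algebra_simps sum.distrib sum_distrib_left)
      also have "\<dots> = (\<Sum>i\<in>I. lam i * tau i ^ k)" using w(2) \<open>k \<le> m\<close> by simp
      finally show "(\<Sum>i\<in>I - {j}. lam1 i * tau i ^ k) = (\<Sum>i\<in>I. lam i * tau i ^ k)" .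
    qed
    have "card (I - {j}) < card I" using jI less.prems(1) by (meson card_Diff1_less)
    from less.hyps[OF this, of lam1] less.prems(1) lam1nn obtain J lam' where
      J: "J \<subseteq> I - {j}" "card J \<le> Suc m" "\<forall>i\<in>J. 0 \<le> lam' i"
         "\<forall>k\<le>m. (\<Sum>i\<in>J. lam' i * tau i ^ k) = (\<Sum>i\<in>I - {j}. lam1 i * tau i ^ k)" by auto
    show ?thesis using J sums by (intro exI[of _ J] exI[of _ lam']) auto
  qed
qed

lemma fixlen:
  fixes lam tau :: "nat \<Rightarrow> real"
  assumes "finite J" "card J \<le> K" "\<forall>i\<in>J. 0 \<le> lam i \<and> a \<le> tau i \<and> tau i \<le> b" "a \<le> b"
  shows "\<exists>lam2 tau2. (\<forall>i<K. 0 \<le> lam2 i \<and> a \<le> tau2 i \<and> tau2 i \<le> b) \<and>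
     (\<forall>k. (\<Sum>i<K. lam2 i * tau2 i ^ k) = (\<Sum>i\<in>J. lam i * tau i ^ k))"
proof -
  obtain f where f: "bij_betw f {..<card J} J" using ex_bij_betw_nat_finite[OF assms(1)]
    by (auto simp: atLeast0LessThan)
  define lam2 where "lam2 = (\<lambda>i. if i < card J then lam (f i) else 0)"
  define tau2 where "tau2 = (\<lambda>i. if i < card J then tau (f i) else a)"
  have fi: "i < card J \<Longrightarrow> f i \<in> J" for i using f by (auto simp: bij_betw_def)
  show ?thesis
  proof (intro exI conjI allI impI)
    fix i assume "i < K"
    show "0 \<le> lam2 i" "a \<le> tau2 i" "tau2 i \<le> b" using fi assms(3,4) by (auto simp: lam2_def tau2_def)
  next
    fix k
    have "(\<Sum>i<K. lam2 i * tau2 i ^ k) = (\<Sum>i<card J. lam2 i * tau2 i ^ k)"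
      by (rule sum.mono_neutral_right) (use assms(2) in \<open>auto simp: lam2_def\<close>)
    also have "\<dots> = (\<Sum>i<card J. lam (f i) * tau (f i) ^ k)" by (simp add: lam2_def tau2_def)
    also have "\<dots> = (\<Sum>i\<in>J. lam i * tau i ^ k)" using sum.reindex_bij_betw[OF f] by simp
    finally show "(\<Sum>i<K. lam2 i * tau2 i ^ k) = (\<Sum>i\<in>J. lam i * tau i ^ k)" .
  qed
qed

lemma bw:
  fixes x :: "nat \<Rightarrow> nat \<Rightarrow> real"
  assumes "\<forall>j. \<forall>i<K. \<bar>x j i\<bar> \<le> B"
  shows "\<exists>r g. strict_mono r \<and> (\<forall>i<K. (\<lambda>j. x (r j) i) \<longlonglongrightarrow> g i)"
  using assms
proof (induction K)
  case 0 show ?case by (intro exI[of _ id] exI[of _ "\<lambda>_. 0"]) (auto simp: strict_mono_id)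
next
  case (Suc K)
  then obtain r g where r: "strict_mono r" "\<forall>i<K. (\<lambda>j. x (r j) i) \<longlonglongrightarrow> g i" by auto
  have "bounded (range (\<lambda>j. x (r j) K))" using Suc.prems by (auto simp: bounded_iff intro!: exI[of _ B])
  then obtain l r' where r': "strict_mono r'" "((\<lambda>j. x (r j) K) \<circ> r') \<longlonglongrightarrow> l"
    using bounded_imp_convergent_subsequence by blast
  show ?case
  proof (intro exI conjI allI impI)
    show "strict_mono (r \<circ> r')" using r r' strict_mono_o by blast
    fix i assume "i < Suc K"
    show "(\<lambda>j. x ((r \<circ> r') j) i) \<longlonglongrightarrow> (g(K := l)) i"
    proof (cases "i = K")
      case True then show ?thesis using r' by (simp add: o_def)
    next
      case False then have "i < K" using \<open>i<Suc K\<close> by simp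
      from LIMSEQ_subseq_LIMSEQ[OF r(2)[rule_format, OF this] r'(1)] False show ?thesis by (simp add: o_def)
    qed
  qed
qed

lemma poly_sum_le: fixes P :: "real poly" assumes "degree P \<le> m" shows "poly P x = (\<Sum>k\<le>m. coeff P k * x ^ k)"
proof -
  have "poly P x = (\<Sum>i\<le>degree P. coeff P i * x ^ i)" by (rule poly_altdef)
  also have "\<dots> = (\<Sum>k\<le>m. coeff P k * x ^ k)"
    by (rule sum.mono_neutral_left) (use assms in \<open>auto simp: coeff_eq_0\<close>)
  finally show ?thesis .
qed

definition msum :: "(nat \<Rightarrow> real) \<Rightarrow> nat \<Rightarrow> real poly" where
  "msum g m = (\<Sum>k\<le>m. monom (g k) k)"

lemma coeff_msum: "coeff (msum g m) k = (if k \<le> m then g k else 0)"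
  by (simp add: msum_def coeff_sum coeff_monom)

lemma degree_msum: "degree (msum g m) \<le> m"
  unfolding msum_def by (rule degree_sum_le) (auto intro: order_trans[OF degree_monom_le])

lemma poly_msum: "poly (msum g m) x = (\<Sum>k\<le>m. g k * x ^ k)"
  by (simp add: msum_def poly_sum poly_monom)

lemma mom_msum: "mom_fun m v (msum g m) = (\<Sum>k\<le>m. g k * v k)"
  by (simp add: mom_fun_def coeff_msum)

lemma mom_smult: "mom_fun m v (smult c P) = c * mom_fun m v P"
  by (simp add: mom_fun_def sum_distrib_left algebra_simps)

lemma margin:
  assumes sp: "strictly_positive_on m v a b"
  shows "\<exists>\<delta>>0. \<forall>P. degree P \<le> m \<and> nonneg_on P a b \<longrightarrow> \<delta> * (\<Sum>k\<le>m. \<bar>coeff P k\<bar>) \<le> mom_fun m v P"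
proof (rule ccontr)
  assume neg: "\<not> ?thesis"
  have "\<exists>P. degree P \<le> m \<and> nonneg_on P a b \<and> mom_fun m v P < inverse (real (Suc j)) * (\<Sum>k\<le>m. \<bar>coeff P k\<bar>)" for j
  proof -
    have "inverse (real (Suc j)) > 0" by simp
    then show ?thesis using neg by (meson not_le)
  qed
  then obtain Pf where Pf: "\<And>j. degree (Pf j) \<le> m" "\<And>j. nonneg_on (Pf j) a b"
    "\<And>j. mom_fun m v (Pf j) < inverse (real (Suc j)) * (\<Sum>k\<le>m. \<bar>coeff (Pf j) k\<bar>)" by metis
  define S where "S j = (\<Sum>k\<le>m. \<bar>coeff (Pf j) k\<bar>)" for j
  have Spos: "S j > 0" for j
  proof -
    have "S j \<ge> 0" by (simp add: S_def sum_nonneg)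
    moreover have "S j \<noteq> 0"
    proof
      assume "S j = 0"
      then have "\<forall>k\<le>m. coeff (Pf j) k = 0" by (simp add: S_def sum_nonneg_eq_0_iff)
      then have "mom_fun m v (Pf j) = 0" by (simp add: mom_fun_def)
      with Pf(3)[of j] \<open>S j = 0\<close> show False by (simp add: S_def)
    qed
    ultimately show ?thesis by simp
  qed
  define R where "R j = smult (inverse (S j)) (Pf j)" for j
  define x where "x j k = coeff (R j) k" for j k
  have xc: "x j k = coeff (Pf j) k / S j" for j k by (simp add: x_def R_def divide_inverse mult.commute)
  have sumx: "(\<Sum>k\<le>m. \<bar>x j k\<bar>) = 1" for j
  proof -
    have "(\<Sum>k\<le>m. \<bar>x j k\<bar>) = (\<Sum>k\<le>m. \<bar>coeff (Pf j) k\<bar>) / S j"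
      using Spos[of j] by (simp add: xc sum_divide_distrib)
    also have "\<dots> = 1" using Spos[of j] by (simp add: S_def)
    finally show ?thesis .
  qed
  have xb: "\<forall>j. \<forall>i<Suc m. \<bar>x j i\<bar> \<le> 1"
  proof (intro allI impI)
    fix j i assume "i < Suc m"
    then have "\<bar>x j i\<bar> \<le> (\<Sum>k\<le>m. \<bar>x j k\<bar>)" by (intro member_le_sum) auto
    then show "\<bar>x j i\<bar> \<le> 1" using sumx by simp
  qed
  have Rdeg: "degree (R j) \<le> m" for j using Pf(1)[of j] degree_smult_le[of "inverse (S j)" "Pf j"]
    by (simp add: R_def)
  have Rnn: "0 \<le> poly (R j) y" if "y \<in> {a..b}" for j y
    using Pf(2)[of j] that Spos[of j] by (auto simp: R_def nonneg_on_def)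
  have Rmom: "mom_fun m v (R j) < inverse (real (Suc j))" for j
  proof -
    have "mom_fun m v (R j) = inverse (S j) * mom_fun m v (Pf j)" by (simp add: R_def mom_smult)
    also have "\<dots> < inverse (S j) * (inverse (real (Suc j)) * S j)"
      using Pf(3)[of j] Spos[of j] by (simp add: S_def)
    also have "\<dots> = inverse (real (Suc j))" using Spos[of j] by simp
    finally show ?thesis .
  qed
  obtain r g where r: "strict_mono r" "\<forall>i<Suc m. (\<lambda>j. x (r j) i) \<longlonglongrightarrow> g i" using bw[OF xb] by blast
  have lim: "\<And>k. k \<in> {..m} \<Longrightarrow> (\<lambda>j. x (r j) k) \<longlonglongrightarrow> g k" using r(2) by auto
  define Q where "Q = msum g m"
  have "(\<lambda>j. \<Sum>k\<le>m. \<bar>x (r j) k\<bar>) \<longlonglongrightarrow> (\<Sum>k\<le>m. \<bar>g k\<bar>)"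
    by (intro tendsto_sum tendsto_rabs lim)
  then have "(\<lambda>j. 1::real) \<longlonglongrightarrow> (\<Sum>k\<le>m. \<bar>g k\<bar>)" using sumx by simp
  then have sg: "(\<Sum>k\<le>m. \<bar>g k\<bar>) = 1" by (simp add: LIMSEQ_const_iff)
  have "Q \<noteq> 0"
  proof
    assume "Q = 0"
    then have "\<forall>k\<le>m. g k = 0" using coeff_msum[of g m] by (auto simp: Q_def) (metis coeff_0)
    then show False using sg by simp
  qed
  moreover have "nonneg_on Q a b"
    unfolding nonneg_on_def
  proof
    fix y assume y: "y \<in> {a..b}"
    have "(\<lambda>j. \<Sum>k\<le>m. x (r j) k * y ^ k) \<longlonglongrightarrow> (\<Sum>k\<le>m. g k * y ^ k)"
      by (intro tendsto_sum tendsto_mult tendsto_const lim)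
    moreover have "(\<Sum>k\<le>m. x (r j) k * y ^ k) = poly (R (r j)) y" for j
      using poly_sum_le[OF Rdeg[of "r j"]] by (simp add: x_def)
    ultimately have "(\<lambda>j. poly (R (r j)) y) \<longlonglongrightarrow> poly Q y" by (simp add: Q_def poly_msum)
    then show "0 \<le> poly Q y" by (rule LIMSEQ_le_const) (use Rnn y in auto)
  qed
  moreover have "mom_fun m v Q \<le> 0"
  proof -
    have "(\<lambda>j. \<Sum>k\<le>m. x (r j) k * v k) \<longlonglongrightarrow> (\<Sum>k\<le>m. g k * v k)"
      by (intro tendsto_sum tendsto_mult tendsto_const lim)
    then have L: "(\<lambda>j. mom_fun m v (R (r j))) \<longlonglongrightarrow> mom_fun m v Q"
      unfolding Q_def mom_msum by (simp add: mom_fun_def x_def)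
    have "mom_fun m v (R (r j)) \<le> inverse (real (Suc j))" for j
    proof -
      have "j \<le> r j" using seq_suble[OF r(1)] .
      then have "inverse (real (Suc (r j))) \<le> inverse (real (Suc j))"
        by (intro le_imp_inverse_le) auto
      then show ?thesis using Rmom[of "r j"] by linarith
    qed
    then show ?thesis using LIMSEQ_le[OF L LIMSEQ_inverse_real_of_nat] by auto
  qed
  moreover have "degree Q \<le> m" by (simp add: Q_def degree_msum)
  ultimately show False using sp unfolding strictly_positive_on_def by force
qed

lemma quad_nonneg:
  fixes A B :: real
  assumes B: "0 \<le> B" and H: "\<forall>\<theta>. 0 < \<theta> \<and> \<theta> < 1 \<longrightarrow> 0 \<le> 2*\<theta>*A + \<theta>^2*B"
  shows "0 \<le> A"
proof (rule ccontr)
  assume "\<not> 0 \<le> A" hence A: "A < 0" by simp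
  define \<theta> where "\<theta> = min (1/2) (-A/(B+1))"
  have "A/(B+1) < 0" using A B by (intro divide_neg_pos) auto
  then have th: "0 < \<theta>" "\<theta> < 1" by (auto simp: \<theta>_def)
  have Bp: "0 < B+1" using B by simp
  have "\<theta> \<le> (-A)/(B+1)" unfolding \<theta>_def by (rule min.cobounded2)
  hence "\<theta>*(B+1) \<le> -A" by (subst (asm) pos_le_divide_eq[OF Bp])
  hence 1: "\<theta> * (\<theta>*(B+1)) \<le> \<theta> * (-A)" using th by (intro mult_left_mono) auto
  have 2: "2*\<theta>*A + \<theta>^2*B = 2*\<theta>*A + \<theta>*(\<theta>*(B+1)) - \<theta>^2" by (simp add: power2_eq_square algebra_simps)
  have 3: "\<theta> * A < 0" using th A by (simp add: mult_pos_neg)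
  have 4: "\<theta>^2 > 0" using th by simp
  have 5: "\<theta> * (-A) = -(\<theta>*A)" "2*\<theta>*A = 2*(\<theta>*A)" by simp_all
  have "2*\<theta>*A + \<theta>^2*B < 0" using 1 2 3 4 5 by linarith
  with H th show False by auto
qed

lemma moment_rep:
  fixes v :: "nat \<Rightarrow> real"
  assumes ab: "a \<le> b" and pos: "\<forall>P. degree P \<le> m \<and> nonneg_on P a b \<longrightarrow> 0 \<le> mom_fun m v P"
  shows "\<exists>(I::nat set) lam tau. finite I \<and> (\<forall>i\<in>I. 0 \<le> lam i \<and> a \<le> tau i \<and> tau i \<le> b) \<and>
            (\<forall>k\<le>m. (\<Sum>i\<in>I. lam i * tau i ^ k) = v k)"
proof -
  define K where "K = Suc m"
  define G where "G c = (\<Sum>k\<le>m. (v k - c k)^2)" for c :: "nat \<Rightarrow> real"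
  define vec where "vec lam tau k = (\<Sum>i<K. lam i * tau i ^ k)" for lam tau :: "nat \<Rightarrow> real" and k
  define adm where "adm lam tau \<longleftrightarrow> (\<forall>i<K. 0 \<le> lam i \<and> a \<le> tau i \<and> tau i \<le> b)" for lam tau :: "nat \<Rightarrow> real"
  define Vals where "Vals = {G (vec lam tau) | lam tau. adm lam tau}"
  define d where "d = Inf Vals"
  have adm0: "adm (\<lambda>_. 0) (\<lambda>_. a)" using ab by (simp add: adm_def)
  have Vne: "Vals \<noteq> {}" using adm0 by (auto simp: Vals_def)
  have Gnn: "0 \<le> G c" for c by (simp add: G_def sum_nonneg)
  have Vbdd: "bdd_below Vals" unfolding Vals_def bdd_below_def using Gnn by blast
  have dle: "d \<le> G (vec lam tau)" if "adm lam tau" for lam tau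
    unfolding d_def by (rule cInf_lower) (use that Vbdd in \<open>auto simp: Vals_def\<close>)
  define B0 where "B0 = (\<Sum>k\<le>m. (v k)^2)"
  have dB: "d \<le> B0" using dle[OF adm0] by (simp add: G_def vec_def B0_def)
  have "\<exists>lam tau. adm lam tau \<and> G (vec lam tau) < d + inverse (real (Suc j))" for j
  proof -
    have "Inf Vals < d + inverse (real (Suc j))" by (simp add: d_def)
    from cInf_lessD[OF Vne this] show ?thesis by (auto simp: Vals_def)
  qed
  then obtain lf tf where lt: "\<And>j. adm (lf j) (tf j)" "\<And>j. G (vec (lf j) (tf j)) < d + inverse (real (Suc j))"
    by metis
  have Gle: "G (vec (lf j) (tf j)) \<le> B0 + 1" for j
  proof -
    have "inverse (real (Suc j)) \<le> inverse 1" by (rule le_imp_inverse_le) auto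
    then have "inverse (real (Suc j)) \<le> 1" by simp
    then show ?thesis using lt(2)[of j] dB by linarith
  qed
  have lamb: "\<forall>j. \<forall>i<K. \<bar>lf j i\<bar> \<le> \<bar>v 0\<bar> + B0 + 2"
  proof (intro allI impI)
    fix j i assume iK: "i < K"
    define Sm where "Sm = (\<Sum>i<K. lf j i)"
    have Sm: "Sm = vec (lf j) (tf j) 0" by (simp add: Sm_def vec_def)
    have "(v 0 - Sm)^2 \<le> G (vec (lf j) (tf j))" unfolding G_def Sm
      by (rule member_le_sum[where i=0, of "{..m}" "\<lambda>k. (v k - vec (lf j) (tf j) k)^2"]) auto
    with Gle[of j] have sq: "(v 0 - Sm)^2 \<le> B0 + 1" by linarith
    have B0nn: "0 \<le> B0" by (simp add: B0_def sum_nonneg)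
    have SmB: "Sm \<le> \<bar>v 0\<bar> + B0 + 2"
    proof (rule ccontr)
      assume "\<not> ?thesis"
      then have h: "Sm - v 0 > B0 + 1" "Sm - v 0 \<ge> 1" using B0nn by auto
      then have "(Sm - v 0) * 1 \<le> (Sm - v 0) * (Sm - v 0)" by (intro mult_left_mono) auto
      then have "(v 0 - Sm)^2 \<ge> Sm - v 0" by (simp add: power2_eq_square algebra_simps)
      with h sq show False by linarith
    qed
    have nn: "\<forall>i<K. 0 \<le> lf j i" using lt(1)[of j] by (simp add: adm_def)
    have "lf j i \<le> Sm" unfolding Sm_def by (rule member_le_sum) (use iK nn in auto)
    then show "\<bar>lf j i\<bar> \<le> \<bar>v 0\<bar> + B0 + 2" using SmB nn iK by auto
  qed
  have taub: "\<forall>j. \<forall>i<K. \<bar>tf j i\<bar> \<le> \<bar>a\<bar> + \<bar>b\<bar>"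
  proof (intro allI impI)
    fix j i assume "i < K"
    then have "a \<le> tf j i" "tf j i \<le> b" using lt(1)[of j] by (auto simp: adm_def)
    moreover have "b \<le> \<bar>b\<bar>" "- a \<le> \<bar>a\<bar>" "0 \<le> \<bar>a\<bar>" "0 \<le> \<bar>b\<bar>" by auto
    ultimately show "\<bar>tf j i\<bar> \<le> \<bar>a\<bar> + \<bar>b\<bar>" unfolding abs_le_iff by linarith
  qed
  obtain r1 g1 where r1: "strict_mono r1" "\<forall>i<K. (\<lambda>j. lf (r1 j) i) \<longlonglongrightarrow> g1 i"
    using bw[OF lamb] by blast
  have taub2: "\<forall>j. \<forall>i<K. \<bar>tf (r1 j) i\<bar> \<le> \<bar>a\<bar> + \<bar>b\<bar>" using taub by auto
  obtain r2 g2 where r2: "strict_mono r2" "\<forall>i<K. (\<lambda>j. tf (r1 (r2 j)) i) \<longlonglongrightarrow> g2 i"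
    using bw[OF taub2] by blast
  define r where "r = r1 \<circ> r2"
  have rmono: "strict_mono r" using r1 r2 strict_mono_o by (auto simp: r_def)
  have L1: "(\<lambda>j. lf (r j) i) \<longlonglongrightarrow> g1 i" if "i \<in> {..<K}" for i
    using LIMSEQ_subseq_LIMSEQ[OF r1(2)[rule_format, of i] r2(1)] that by (simp add: r_def o_def)
  have L2: "(\<lambda>j. tf (r j) i) \<longlonglongrightarrow> g2 i" if "i \<in> {..<K}" for i
    using r2(2) that by (simp add: r_def o_def)
  have admg: "adm g1 g2"
    unfolding adm_def
  proof (intro allI impI conjI)
    fix i assume i: "i < K"
    show "0 \<le> g1 i" by (rule LIMSEQ_le_const[OF L1]) (use i lt(1) in \<open>auto simp: adm_def\<close>)
    show "a \<le> g2 i" by (rule LIMSEQ_le_const[OF L2]) (use i lt(1) in \<open>auto simp: adm_def\<close>)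
    show "g2 i \<le> b" by (rule LIMSEQ_le_const2[OF L2]) (use i lt(1) in \<open>auto simp: adm_def\<close>)
  qed
  have GL: "(\<lambda>j. G (vec (lf (r j)) (tf (r j)))) \<longlonglongrightarrow> G (vec g1 g2)"
    unfolding G_def vec_def
    by (intro tendsto_sum tendsto_power tendsto_diff tendsto_const tendsto_mult L1 L2)
  define c where "c = vec g1 g2"
  have Gc: "G c = d"
  proof (rule antisym)
    have "G (vec (lf (r j)) (tf (r j))) \<le> d + inverse (real (Suc j))" for j
    proof -
      have "j \<le> r j" using seq_suble[OF rmono] .
      then have "inverse (real (Suc (r j))) \<le> inverse (real (Suc j))"
        by (intro le_imp_inverse_le) auto
      then show ?thesis using lt(2)[of "r j"] by linarith
    qed
    moreover have "(\<lambda>j. d + inverse (real (Suc j))) \<longlonglongrightarrow> d + 0"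
      by (intro tendsto_add tendsto_const LIMSEQ_inverse_real_of_nat)
    ultimately show "G c \<le> d" using LIMSEQ_le[OF GL] unfolding c_def by fastforce
    show "d \<le> G c" unfolding c_def by (rule dle[OF admg])
  qed
  have minall: "G c \<le> G (\<lambda>k. \<Sum>i\<in>I. lam i * tau i ^ k)"
    if I: "finite I" "\<forall>i\<in>I. 0 \<le> lam i \<and> a \<le> tau i \<and> tau i \<le> b" for I and lam tau :: "nat \<Rightarrow> real"
  proof -
    obtain J lam' where J: "J \<subseteq> I" "card J \<le> Suc m" "\<forall>i\<in>J. 0 \<le> lam' i"
      "\<forall>k\<le>m. (\<Sum>i\<in>J. lam' i * tau i ^ k) = (\<Sum>i\<in>I. lam i * tau i ^ k)"
      using carat[where I=I and lam=lam and m=m and tau=tau] I by auto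
    have finJ: "finite J" using J(1) I(1) finite_subset by blast
    have Jb: "\<forall>i\<in>J. 0 \<le> lam' i \<and> a \<le> tau i \<and> tau i \<le> b" using J(1,3) I(2) by auto
    have cJ: "card J \<le> K" using J(2) by (simp add: K_def)
    from fixlen[OF finJ cJ Jb ab] obtain lam2 tau2 where L: "\<forall>i<K. 0 \<le> lam2 i \<and> a \<le> tau2 i \<and> tau2 i \<le> b"
      "\<forall>k. (\<Sum>i<K. lam2 i * tau2 i ^ k) = (\<Sum>i\<in>J. lam' i * tau i ^ k)" by blast
    have "G (\<lambda>k. \<Sum>i\<in>I. lam i * tau i ^ k) = G (vec lam2 tau2)"
      unfolding G_def vec_def by (rule sum.cong) (use J(4) L(2) in auto)
    also have "\<dots> \<ge> d" using dle L(1) by (simp add: adm_def)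
    finally show ?thesis using Gc by simp
  qed
  define p where "p k = c k - v k" for k
  have famc: "c k = (\<Sum>i\<in>{..<K}. g1 i * g2 i ^ k)" for k by (simp add: c_def vec_def)
  have var1: "0 \<le> (\<Sum>k\<le>m. p k * t ^ k)" if t: "a \<le> t" "t \<le> b" for t
  proof (rule quad_nonneg[where B = "\<Sum>k\<le>m. (t^k)^2"])
    show "0 \<le> (\<Sum>k\<le>m. (t^k)^2)" by (simp add: sum_nonneg)
    show "\<forall>\<theta>. 0 < \<theta> \<and> \<theta> < 1 \<longrightarrow> 0 \<le> 2*\<theta>*(\<Sum>k\<le>m. p k * t ^ k) + \<theta>^2*(\<Sum>k\<le>m. (t^k)^2)"
    proof (intro allI impI)
      fix \<theta> :: real assume th: "0 < \<theta> \<and> \<theta> < 1"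
      define lam where "lam = g1(K := \<theta>)"
      define tau where "tau = g2(K := t)"
      have fam: "(\<Sum>i\<in>{..<Suc K}. lam i * tau i ^ k) = c k + \<theta> * t ^ k" for k
      proof -
        have "(\<Sum>i\<in>{..<Suc K}. lam i * tau i ^ k) = (\<Sum>i\<in>{..<K}. lam i * tau i ^ k) + \<theta> * t ^ k"
          by (simp add: lam_def tau_def)
        also have "(\<Sum>i\<in>{..<K}. lam i * tau i ^ k) = c k" unfolding famc
          by (rule sum.cong) (auto simp: lam_def tau_def)
        finally show ?thesis .
      qed
      have "G c \<le> G (\<lambda>k. \<Sum>i\<in>{..<Suc K}. lam i * tau i ^ k)"
        by (rule minall) (use admg th t in \<open>auto simp: adm_def lam_def tau_def less_Suc_eq\<close>)
      also have "\<dots> = G c + (2*\<theta>*(\<Sum>k\<le>m. p k * t ^ k) + \<theta>^2*(\<Sum>k\<le>m. (t^k)^2))"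
        unfolding fam G_def p_def
        by (simp add: sum.distrib[symmetric] sum_distrib_left power2_eq_square algebra_simps)
      finally show "0 \<le> 2*\<theta>*(\<Sum>k\<le>m. p k * t ^ k) + \<theta>^2*(\<Sum>k\<le>m. (t^k)^2)" by simp
    qed
  qed
  have scal: "G c \<le> G c + (2*\<theta>*(\<Sum>k\<le>m. p k * c k) + \<theta>^2*(\<Sum>k\<le>m. (c k)^2))"
    if th: "-1 < \<theta>" for \<theta>
  proof -
    have "G c \<le> G (\<lambda>k. \<Sum>i\<in>{..<K}. ((1+\<theta>) * g1 i) * g2 i ^ k)"
      by (rule minall) (use admg th in \<open>auto simp: adm_def\<close>)
    also have "(\<lambda>k. \<Sum>i\<in>{..<K}. ((1+\<theta>) * g1 i) * g2 i ^ k) = (\<lambda>k. (1+\<theta>) * c k)"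
      unfolding famc by (simp add: sum_distrib_left mult.assoc)
    also have "G (\<lambda>k. (1+\<theta>) * c k) = G c + (2*\<theta>*(\<Sum>k\<le>m. p k * c k) + \<theta>^2*(\<Sum>k\<le>m. (c k)^2))"
      unfolding G_def p_def
      by (simp add: sum.distrib[symmetric] sum_distrib_left power2_eq_square algebra_simps)
    finally show ?thesis .
  qed
  have var2: "(\<Sum>k\<le>m. p k * c k) = 0"
  proof (rule antisym)
    have "0 \<le> (\<Sum>k\<le>m. p k * c k)"
      by (rule quad_nonneg[where B = "\<Sum>k\<le>m. (c k)^2"]) (use scal in \<open>auto simp: sum_nonneg\<close>)
    then show "0 \<le> (\<Sum>k\<le>m. p k * c k)" .
    have "0 \<le> - (\<Sum>k\<le>m. p k * c k)"
    proof (rule quad_nonneg[where B = "\<Sum>k\<le>m. (c k)^2"])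
      show "0 \<le> (\<Sum>k\<le>m. (c k)^2)" by (simp add: sum_nonneg)
      show "\<forall>\<theta>. 0 < \<theta> \<and> \<theta> < 1 \<longrightarrow> 0 \<le> 2*\<theta>*(- (\<Sum>k\<le>m. p k * c k)) + \<theta>^2*(\<Sum>k\<le>m. (c k)^2)"
      proof (intro allI impI)
        fix \<theta> :: real assume "0 < \<theta> \<and> \<theta> < 1"
        then have "-1 < - \<theta>" by simp
        from scal[OF this] show "0 \<le> 2*\<theta>*(- (\<Sum>k\<le>m. p k * c k)) + \<theta>^2*(\<Sum>k\<le>m. (c k)^2)" by simp
      qed
    qed
    then show "(\<Sum>k\<le>m. p k * c k) \<le> 0" by simp
  qed
  define P where "P = msum p m"
  have "nonneg_on P a b" unfolding nonneg_on_def P_def poly_msum using var1 by auto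
  moreover have "degree P \<le> m" by (simp add: P_def degree_msum)
  ultimately have "0 \<le> mom_fun m v P" using pos by blast
  also have "mom_fun m v P = (\<Sum>k\<le>m. p k * c k) - (\<Sum>k\<le>m. (p k)^2)"
    unfolding P_def mom_msum by (simp add: p_def sum_subtractf[symmetric] power2_eq_square algebra_simps)
  finally have "(\<Sum>k\<le>m. (p k)^2) \<le> 0" using var2 by simp
  then have "(\<Sum>k\<le>m. (p k)^2) = 0" by (meson antisym sum_nonneg zero_le_power2)
  then have p0: "\<forall>k\<le>m. p k = 0" by (simp add: sum_nonneg_eq_0_iff)
  have c1: "\<forall>i\<in>{..<K}. 0 \<le> g1 i \<and> a \<le> g2 i \<and> g2 i \<le> b" using admg by (auto simp: adm_def)
  have c2: "\<forall>k\<le>m. (\<Sum>i\<in>{..<K}. g1 i * g2 i ^ k) = v k" using p0 famc by (auto simp: p_def)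
  show ?thesis
    by (rule exI[of _ "{..<K}"], rule exI[of _ g1], rule exI[of _ g2]) (use c1 c2 in simp)
qed


lemma atomic_measure:
  fixes I :: "nat set" and w tau :: "nat \<Rightarrow> real"
  assumes fin: "finite I" and wt: "\<forall>i\<in>I. 0 \<le> w i \<and> a \<le> tau i \<and> tau i \<le> b"
  defines "M \<equiv> distr (point_measure I (\<lambda>i. ennreal (w i))) borel tau"
  shows "sets M = sets borel" "finite_measure M" "emeasure M (UNIV - {a..b}) = 0"
    "\<And>f. f \<in> borel_measurable borel \<Longrightarrow> integral\<^sup>L M f = (\<Sum>i\<in>I. w i * f (tau i))"
proof -
  let ?N = "point_measure I (\<lambda>i. ennreal (w i))"
  have meas: "tau \<in> ?N \<rightarrow>\<^sub>M borel"
    unfolding point_measure_def measurable_density_eq1 by (simp add: measurable_count_space_eq1)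
  show "sets M = sets borel" by (simp add: M_def)
  have spN: "space ?N = I" by (simp add: point_measure_def)
  have "emeasure ?N (space ?N) = (\<Sum>i\<in>I. ennreal (w i))"
    unfolding spN by (rule emeasure_point_measure_finite[OF fin]) simp
  also have "(\<Sum>i\<in>I. ennreal (w i)) = ennreal (\<Sum>i\<in>I. w i)" using wt by (simp add: sum_ennreal)
  finally have "emeasure ?N (space ?N) \<noteq> \<infinity>" by simp
  then have "finite_measure ?N" by (rule finite_measureI)
  then show "finite_measure M" unfolding M_def by (rule finite_measure.finite_measure_distr[OF _ meas])
  have "emeasure M (UNIV - {a..b}) = emeasure ?N (tau -` (UNIV - {a..b}) \<inter> space ?N)"
    unfolding M_def by (rule emeasure_distr[OF meas]) simp
  also have "tau -` (UNIV - {a..b}) \<inter> space ?N = {}" using wt spN by auto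
  finally show "emeasure M (UNIV - {a..b}) = 0" by simp
  fix f :: "real \<Rightarrow> real" assume f: "f \<in> borel_measurable borel"
  have "integral\<^sup>L M f = integral\<^sup>L ?N (\<lambda>i. f (tau i))"
    unfolding M_def by (rule integral_distr[OF meas f])
  also have "\<dots> = integral\<^sup>L (count_space I) (\<lambda>i. w i *\<^sub>R f (tau i))"
    unfolding point_measure_def
    by (rule integral_density) (use wt in \<open>auto simp: AE_count_space\<close>)
  also have "\<dots> = (\<Sum>i\<in>I. w i * f (tau i))" by (simp add: lebesgue_integral_count_space_finite[OF fin])
  finally show "integral\<^sup>L M f = (\<Sum>i\<in>I. w i * f (tau i))" .
qed

lemma rep_basic:
  assumes "M \<in> rep_measures n s a b"
  shows "sets M = sets borel" "finite_measure M" "space M = UNIV" "AE x in M. x \<in> {a..b}"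
    "\<And>k. k \<le> n \<Longrightarrow> integral\<^sup>L M (\<lambda>x. x ^ k) = s k"
proof -
  show M1: "sets M = sets borel" and "finite_measure M" and "\<And>k. k \<le> n \<Longrightarrow> integral\<^sup>L M (\<lambda>x. x ^ k) = s k"
    using assms by (auto simp: rep_measures_def)
  show sp: "space M = UNIV" using sets_eq_imp_space_eq[OF M1] by simp
  have e: "emeasure M (UNIV - {a..b}) = 0" using assms by (auto simp: rep_measures_def)
  have "UNIV - {a..b} \<in> sets M" using M1 by simp
  then have "UNIV - {a..b} \<in> null_sets M" using e by (simp add: null_sets_def)
  then show "AE x in M. x \<in> {a..b}" by (rule AE_I') (auto simp: sp)
qed

lemma rep_integrable:
  fixes f :: "real \<Rightarrow> real"
  assumes "M \<in> rep_measures n s a b" and "continuous_on {a..b} f" and "f \<in> borel_measurable borel"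
  shows "integrable M f"
proof -
  note R = rep_basic[OF assms(1)]
  have "bounded (f ` {a..b})" by (rule compact_imp_bounded[OF compact_continuous_image[OF assms(2) compact_Icc]])
  from this[unfolded bounded_iff] obtain B where B0: "\<forall>y\<in>f ` {a..b}. norm y \<le> B" by blast
  have B: "norm (f x) \<le> B" if "x \<in> {a..b}" for x using B0 that by blast
  have AEB: "AE x in M. norm (f x) \<le> B" using R(4) by (rule AE_mp) (rule AE_I2, use B in blast)
  have fm: "f \<in> borel_measurable M" by (subst measurable_cong_sets[OF R(1) refl]) (rule assms(3))
  show ?thesis using finite_measure.integrable_const_bound[OF R(2) AEB fm] .
qed

lemma poly_meas: "(\<lambda>x. poly P x) \<in> borel_measurable borel" for P :: "real poly"
  by (rule borel_measurable_continuous_onI, rule continuous_on_poly, rule continuous_on_id)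

lemma rep_mom:
  fixes Q :: "real poly"
  assumes "M \<in> rep_measures n s a b" "degree Q \<le> n"
  shows "mom_fun n s Q = integral\<^sup>L M (\<lambda>x. poly Q x)"
proof -
  note R = rep_basic[OF assms(1)]
  have int: "integrable M (\<lambda>x. coeff Q k * x ^ k)" for k
  proof -
    have c: "continuous_on UNIV (\<lambda>x::real. coeff Q k * x ^ k)" by (intro continuous_intros)
    show ?thesis
      by (rule rep_integrable[OF assms(1) continuous_on_subset[OF c] borel_measurable_continuous_onI[OF c]]) simp
  qed
  have "integral\<^sup>L M (\<lambda>x. poly Q x) = integral\<^sup>L M (\<lambda>x. \<Sum>k\<le>n. coeff Q k * x ^ k)"
    using poly_sum_le[OF assms(2)] by simp
  also have "\<dots> = (\<Sum>k\<le>n. integral\<^sup>L M (\<lambda>x. coeff Q k * x ^ k))"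
    by (rule Bochner_Integration.integral_sum) (use int in auto)
  also have "\<dots> = (\<Sum>k\<le>n. coeff Q k * s k)" using R(5) by (simp add: integral_mult_right_zero)
  finally show ?thesis by (simp add: mom_fun_def)
qed


lemma mom_shift: "mom_fun (Suc n) (case_nat x s) P = coeff P 0 * x + (\<Sum>k\<le>n. coeff P (Suc k) * s k)"
  unfolding mom_fun_def by (subst sum.atMost_Suc_shift) simp

lemma dir_fwd:
  assumes sp': "strictly_positive_01 (Suc n) (case_nat sm1 s)"
  shows "t_1 n s < ereal sm1"
proof -
  from sp' obtain a b where ab: "0<a" "a<b" "b\<le>1" "strictly_positive_on (Suc n) (case_nat sm1 s) a b"
    by (auto simp: strictly_positive_01_def)
  from margin[OF ab(4)] obtain \<delta> where \<delta>: "\<delta>>0"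
    "\<forall>P. degree P \<le> Suc n \<and> nonneg_on P a b \<longrightarrow> \<delta> * (\<Sum>k\<le>Suc n. \<bar>coeff P k\<bar>) \<le> mom_fun (Suc n) (case_nat sm1 s) P"
    by blast
  define v where "v = case_nat (sm1 - \<delta>) s"
  have pos: "\<forall>P. degree P \<le> Suc n \<and> nonneg_on P a b \<longrightarrow> 0 \<le> mom_fun (Suc n) v P"
  proof (intro allI impI)
    fix P :: "real poly" assume P: "degree P \<le> Suc n \<and> nonneg_on P a b"
    have e: "mom_fun (Suc n) v P = mom_fun (Suc n) (case_nat sm1 s) P - \<delta> * coeff P 0"
      unfolding v_def mom_shift by (simp add: algebra_simps)
    have "\<bar>coeff P 0\<bar> \<le> (\<Sum>k\<le>Suc n. \<bar>coeff P k\<bar>)" by (rule member_le_sum) auto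
    then have "\<delta> * coeff P 0 \<le> \<delta> * (\<Sum>k\<le>Suc n. \<bar>coeff P k\<bar>)"
      using \<delta>(1) by (meson abs_ge_self mult_left_mono order_trans less_imp_le)
    then show "0 \<le> mom_fun (Suc n) v P" using \<delta>(2) P e by fastforce
  qed
  have "a \<le> b" using ab by simp
  from moment_rep[OF this pos] obtain I :: "nat set" and lam tau where rep: "finite I"
    "\<forall>i\<in>I. 0 \<le> lam i \<and> a \<le> tau i \<and> tau i \<le> b" "\<forall>k\<le>Suc n. (\<Sum>i\<in>I. lam i * tau i ^ k) = v k"
    by blast
  define w where "w i = lam i * tau i" for i
  define M where "M = distr (point_measure I (\<lambda>i. ennreal (w i))) borel tau"
  have wt: "\<forall>i\<in>I. 0 \<le> w i \<and> a \<le> tau i \<and> tau i \<le> b" using rep(2) ab(1) by (auto simp: w_def)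
  note AM = atomic_measure[OF rep(1) wt, folded M_def]
  have Mrep: "M \<in> rep_measures n s a b"
    unfolding rep_measures_def
  proof (intro CollectI conjI allI impI)
    show "sets M = sets borel" "finite_measure M" "emeasure M (UNIV - {a..b}) = 0" using AM by auto
    fix k assume k: "k \<le> n"
    have "(\<lambda>x::real. x ^ k) \<in> borel_measurable borel"
      by (rule borel_measurable_continuous_onI) (intro continuous_intros)
    then have "integral\<^sup>L M (\<lambda>x. x ^ k) = (\<Sum>i\<in>I. w i * tau i ^ k)" by (rule AM(4))
    also have "\<dots> = (\<Sum>i\<in>I. lam i * tau i ^ Suc k)" by (simp add: w_def algebra_simps)
    also have "\<dots> = s k" using rep(3)[rule_format, of "Suc k"] k by (simp add: v_def)
    finally show "integral\<^sup>L M (\<lambda>x. x ^ k) = s k" .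
  qed
  have int1: "integral\<^sup>L M (\<lambda>t. 1/t) = sm1 - \<delta>"
  proof -
    have "(\<lambda>x::real. 1 / x) \<in> borel_measurable borel" by measurable
    then have "integral\<^sup>L M (\<lambda>t. 1/t) = (\<Sum>i\<in>I. w i * (1 / tau i))" by (rule AM(4))
    also have "\<dots> = (\<Sum>i\<in>I. lam i * tau i ^ 0)"
      by (rule sum.cong) (use wt ab(1) in \<open>auto simp: w_def\<close>)
    also have "\<dots> = sm1 - \<delta>" using rep(3)[rule_format, of 0] by (simp add: v_def)
    finally show ?thesis .
  qed
  have "t_1 n s \<le> t_ab n s a b" unfolding t_1_def by (rule INF_lower2[of "(a,b)"]) (use ab in auto)
  also have "t_ab n s a b \<le> ereal (sm1 - \<delta>)" unfolding t_ab_def using Mrep int1 by (metis INF_lower)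
  also have "\<dots> < ereal sm1" using \<delta> by simp
  finally show ?thesis .
qed

lemma dir_back:
  assumes sp: "strictly_positive_01 n s" and tl: "t_1 n s < ereal sm1"
  shows "strictly_positive_01 (Suc n) (case_nat sm1 s)"
proof -
  from sp obtain a0 b0 where ab0: "0 < a0" "a0 < b0" "b0 \<le> 1" "strictly_positive_on n s a0 b0"
    by (auto simp: strictly_positive_01_def)
  from margin[OF ab0(4)] obtain \<delta> where \<delta>: "\<delta> > 0"
    "\<forall>P. degree P \<le> n \<and> nonneg_on P a0 b0 \<longrightarrow> \<delta> * (\<Sum>k\<le>n. \<bar>coeff P k\<bar>) \<le> mom_fun n s P" by blast
  from tl obtain ab where ab': "ab \<in> {(a, b). 0 < a \<and> a < b \<and> b \<le> (1::real)}" "t_ab n s (fst ab) (snd ab) < ereal sm1"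
    unfolding t_1_def by (auto simp: INF_less_iff)
  define a where "a = fst ab"
  define b where "b = snd ab"
  have ab: "0 < a" "a < b" "b \<le> 1" "t_ab n s a b < ereal sm1" using ab' by (auto simp: a_def b_def)
  then obtain M where M: "M \<in> rep_measures n s a b" "ereal (integral\<^sup>L M (\<lambda>t. 1/t)) < ereal sm1"
    unfolding t_ab_def by (auto simp: INF_less_iff)
  define c where "c = integral\<^sup>L M (\<lambda>t. 1/t)"
  have csm: "c < sm1" using M(2) by (simp add: c_def)
  define \<alpha> where "\<alpha> = min (min a a0) (\<delta> / (\<bar>sm1\<bar> + 1))"
  define \<beta> where "\<beta> = max b b0"
  have apos: "0 < \<alpha>" using ab ab0 \<delta> by (simp add: \<alpha>_def)
  have ale: "\<alpha> \<le> a" "\<alpha> \<le> a0" "\<alpha> \<le> \<delta> / (\<bar>sm1\<bar> + 1)" by (auto simp: \<alpha>_def)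
  have bge: "b \<le> \<beta>" "b0 \<le> \<beta>" "\<beta> \<le> 1" using ab ab0 by (auto simp: \<beta>_def)
  have ab2: "\<alpha> < \<beta>" using ale bge ab by linarith
  have a1: "\<alpha> \<le> 1" using ale ab by linarith
  have da: "sm1 < \<delta> / \<alpha>"
  proof -
    have "\<alpha> * (\<bar>sm1\<bar> + 1) \<le> \<delta>" using ale(3) by (simp add: le_divide_eq)
    then have "\<bar>sm1\<bar> + 1 \<le> \<delta> / \<alpha>" using apos by (simp add: le_divide_eq mult.commute)
    then show ?thesis by linarith
  qed
  note R = rep_basic[OF M(1)]
  have bm: "g \<in> borel_measurable M" if "g \<in> borel_measurable borel" for g :: "real \<Rightarrow> real"
    by (subst measurable_cong_sets[OF R(1) refl]) (rule that)
  have idm: "(\<lambda>x::real. x) \<in> borel_measurable borel"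
    by (rule borel_measurable_continuous_onI) (rule continuous_on_id)
  have key: "0 \<le> mom_fun (Suc n) (case_nat sm1 s) P \<and> (P \<noteq> 0 \<longrightarrow> 0 < mom_fun (Suc n) (case_nat sm1 s) P)"
    if P: "degree P \<le> Suc n" "nonneg_on P \<alpha> \<beta>" for P
  proof -
    obtain p0 Q where PQ: "P = pCons p0 Q" by (cases P)
    have degQ: "degree Q \<le> n" using P(1) PQ by (cases "Q = 0") auto
    have momP: "mom_fun (Suc n) (case_nat sm1 s) P = p0 * sm1 + mom_fun n s Q"
      unfolding mom_shift by (simp add: PQ mom_fun_def)
    have polyP: "poly P x = p0 + x * poly Q x" for x by (simp add: PQ)
    have Pnn: "0 \<le> poly P x" if "\<alpha> \<le> x" "x \<le> \<beta>" for x using P(2) that by (auto simp: nonneg_on_def)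
    have m1: "(\<lambda>t. poly P t / t) \<in> borel_measurable borel"
      by (rule borel_measurable_divide[OF poly_meas idm])
    have m2: "(\<lambda>t::real. 1 / t) \<in> borel_measurable borel" by measurable
    have c1: "continuous_on {a..b} (\<lambda>t. poly P t / t)"
      using ab by (intro continuous_on_divide continuous_on_poly continuous_on_id) auto
    have c2: "continuous_on {a..b} (\<lambda>t::real. 1 / t)"
      using ab by (intro continuous_on_divide continuous_on_const continuous_on_id) auto
    have i1: "integrable M (\<lambda>t. poly P t / t)" by (rule rep_integrable[OF M(1) c1 m1])
    have i2: "integrable M (\<lambda>t. p0 * (1 / t))" by (rule integrable_mult_right[OF rep_integrable[OF M(1) c2 m2]])
    have momQ: "mom_fun n s Q = integral\<^sup>L M (\<lambda>t. poly P t / t) - p0 * c"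
    proof -
      have "mom_fun n s Q = integral\<^sup>L M (\<lambda>x. poly Q x)" by (rule rep_mom[OF M(1) degQ])
      also have "\<dots> = integral\<^sup>L M (\<lambda>t. poly P t / t - p0 * (1 / t))"
      proof (rule integral_cong_AE)
        show "(\<lambda>x. poly Q x) \<in> borel_measurable M" by (rule bm[OF poly_meas])
        show "(\<lambda>t. poly P t / t - p0 * (1 / t)) \<in> borel_measurable M"
          by (rule bm) (intro borel_measurable_diff borel_measurable_times m1 m2 borel_measurable_const)
        show "AE x in M. poly Q x = poly P x / x - p0 * (1 / x)"
          by (rule AE_mp[OF R(4)]) (rule AE_I2, use ab in \<open>auto simp: polyP field_simps\<close>)
      qed
      also have "\<dots> = integral\<^sup>L M (\<lambda>t. poly P t / t) - integral\<^sup>L M (\<lambda>t. p0 * (1 / t))"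
        by (rule Bochner_Integration.integral_diff[OF i1 i2])
      also have "integral\<^sup>L M (\<lambda>t. p0 * (1 / t)) = p0 * c" unfolding c_def by (rule integral_mult_right_zero)
      finally show ?thesis .
    qed
    have intnn: "0 \<le> integral\<^sup>L M (\<lambda>t. poly P t / t)"
    proof (rule integral_nonneg_AE)
      show "AE x in M. 0 \<le> poly P x / x"
      proof (rule AE_mp[OF R(4)], rule AE_I2, intro impI)
        fix x assume x: "x \<in> {a..b}"
        then have "\<alpha> \<le> x" "x \<le> \<beta>" using ale bge by auto
        then show "0 \<le> poly P x / x" using Pnn apos by simp
      qed
    qed
    show ?thesis
    proof (cases "p0 < 0")
      case True
      have Qpos: "0 \<le> poly Q x" if "\<alpha> \<le> x" "x \<le> \<beta>" for x
      proof -
        have "0 \<le> x * poly Q x" using Pnn[OF that] True polyP[of x] by linarith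
        then show ?thesis using that apos by (simp add: zero_le_mult_iff)
      qed
      have "nonneg_on Q a0 b0" unfolding nonneg_on_def using Qpos ale bge by auto
      then have A1: "\<delta> * (\<Sum>k\<le>n. \<bar>coeff Q k\<bar>) \<le> mom_fun n s Q" using \<delta>(2) degQ by blast
      have "poly Q \<alpha> = (\<Sum>k\<le>n. coeff Q k * \<alpha> ^ k)" by (rule poly_sum_le[OF degQ])
      also have "\<dots> \<le> (\<Sum>k\<le>n. \<bar>coeff Q k\<bar>)"
      proof (rule sum_mono)
        fix k assume "k \<in> {..n}"
        have "\<alpha> ^ k \<le> 1" using apos a1 by (simp add: power_le_one)
        moreover have "0 \<le> \<alpha> ^ k" using apos by simp
        ultimately have "\<bar>coeff Q k\<bar> * \<alpha> ^ k \<le> \<bar>coeff Q k\<bar>" by (simp add: mult_left_le)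
        moreover have "coeff Q k * \<alpha> ^ k \<le> \<bar>coeff Q k\<bar> * \<alpha> ^ k"
          using \<open>0 \<le> \<alpha> ^ k\<close> by (simp add: mult_right_mono)
        ultimately show "coeff Q k * \<alpha> ^ k \<le> \<bar>coeff Q k\<bar>" by linarith
      qed
      finally have A2: "\<delta> * poly Q \<alpha> \<le> mom_fun n s Q" using A1 \<delta>(1)
        by (meson mult_left_mono less_imp_le order_trans)
      have A3: "-p0 \<le> \<alpha> * poly Q \<alpha>" using Pnn[of \<alpha>] ab2 polyP[of \<alpha>] by simp
      have "(-p0) / \<alpha> \<le> poly Q \<alpha>" by (subst pos_divide_le_eq[OF apos]) (use A3 in \<open>simp add: mult.commute\<close>)
      then have A4: "\<delta> * ((-p0) / \<alpha>) \<le> \<delta> * poly Q \<alpha>" using \<delta>(1) by (intro mult_left_mono) auto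
      have A5: "\<delta> * ((-p0) / \<alpha>) = (\<delta> / \<alpha>) * (-p0)" by simp
      have A6: "sm1 * (-p0) < (\<delta> / \<alpha>) * (-p0)" using da True by (intro mult_strict_right_mono) auto
      have "0 < p0 * sm1 + mom_fun n s Q" using A2 A4 A5 A6 by (simp add: algebra_simps)
      then show ?thesis using momP by simp
    next
      case False
      then have p0: "0 \<le> p0" by simp
      have e: "mom_fun (Suc n) (case_nat sm1 s) P = p0 * (sm1 - c) + integral\<^sup>L M (\<lambda>t. poly P t / t)"
        using momP momQ by (simp add: algebra_simps)
      have ge: "0 \<le> p0 * (sm1 - c)" using p0 csm by simp
      show ?thesis
      proof (intro conjI impI)
        show "0 \<le> mom_fun (Suc n) (case_nat sm1 s) P" using e ge intnn by linarith
        assume "P \<noteq> 0"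
        show "0 < mom_fun (Suc n) (case_nat sm1 s) P"
        proof (cases "p0 = 0")
          case False
          then have "0 < p0 * (sm1 - c)" using p0 csm by simp
          then show ?thesis using e intnn by linarith
        next
          case True
          then have "Q \<noteq> 0" using \<open>P \<noteq> 0\<close> PQ by auto
          moreover have "nonneg_on Q a0 b0"
            unfolding nonneg_on_def
          proof
            fix x assume x: "x \<in> {a0..b0}"
            then have "\<alpha> \<le> x" "x \<le> \<beta>" using ale bge by auto
            then have "0 \<le> poly P x" by (rule Pnn)
            then have "0 \<le> x * poly Q x" using polyP[of x] True by simp
            then show "0 \<le> poly Q x" using x ab0 by (simp add: zero_le_mult_iff)
          qed
          ultimately have "0 < mom_fun n s Q" using ab0(4) degQ by (auto simp: strictly_positive_on_def)
          then show ?thesis using momP True by simp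
        qed
      qed
    qed
  qed
  show ?thesis unfolding strictly_positive_01_def strictly_positive_on_def positive_on_def
    by (rule exI[of _ \<alpha>], rule exI[of _ \<beta>]) (use apos ab2 bge key in blast)
qed

theorem theorem8p4:
  fixes n :: nat and s :: "nat \<Rightarrow> real" and sm1 :: real
  assumes "\<forall>k\<le>n. s k \<ge> 0"
    and "strictly_positive_01 n s"
    and "sm1 \<ge> 0"
  shows "strictly_positive_01 (Suc n) (case_nat sm1 s) \<longleftrightarrow> t_1 n s < ereal sm1"
  using dir_fwd[of n sm1 s] dir_back[OF assms(2), of sm1] by blast

end
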